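(* Assume that $\hat R$ satisfies condition (ii) and let $\hat F\in\mathrm{Aut}(V\otimes V)$. Let $M$ and $M'$ be operators on $V$ with entries in a common associative algebra $\mathfrak A$, both half-quantum matrices, i.e. $S^{(2)}_{12}M_{\bar1}M_{\bar2}A^{(2)}_{12}=0$ and $S^{(2)}_{12}M'_{\bar1}M'_{\bar2}A^{(2)}_{12}=0$, and satisfying \[ \hat F_{12}M_1\hat F_{12}^{-1}M'_1=M'_1\hat F_{12}M_1\hat F_{12}^{-1}. \] Then the product $MM'$ (matrix product with entries in $\mathfrak A$) is again a half-quantum matrix: $S^{(2)}_{12}(MM')_{\bar1}(MM')_{\bar2}A^{(2)}_{12}=0$.
   Context: Let $V$ be a finite-dimensional complex vector space, $\mathrm{Id}$ the identity. For an operator $X$ on $V$ (possibly with entries in $\mathfrak A$), $X_j$ denotes $X$ acting in the $j$-th tensor factor of $V\otimes V$; for $Y$ on $V\otimes V$, $Y_{12}=Y$. Condition (ii): $q\in\mathbb C^*$ with $q+q^{-1}\ne0$ and $\hat R=qS^{(2)}-q^{-1}A^{(2)}$ with $S^{(2)},A^{(2)}$ idempotents on $V\otimes V$, $S^{(2)}+A^{(2)}=\mathrm{Id}$. For an $\mathfrak A$-valued $N$ on $V$: $N_{\bar1}:=N_1$, $N_{\bar2}:=\hat F_{12}N_1\hat F_{12}^{-1}$. *)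

theory Defs
  imports Complex_Main
begin

text \<open>V is modelled by a finite basis index type 'n; operators on V are
  functions 'n => 'n => _ (matrices), operators on V (x) V are matrices indexed by
  'n \<times> 'n. The algebra \<AA> is an associative ring 'a with a complex scalar action s.\<close>

definition is_calg :: "(complex \<Rightarrow> 'a::ring \<Rightarrow> 'a) \<Rightarrow> bool" where
  "is_calg s \<longleftrightarrow>
     (\<forall>a b x. s (a + b) x = s a x + s b x) \<and>
     (\<forall>a x y. s a (x + y) = s a x + s a y) \<and>
     (\<forall>a b x. s (a * b) x = s a (s b x)) \<and>
     (\<forall>x. s 1 x = x) \<and>
     (\<forall>a x y. s a (x * y) = s a x * y) \<and>
     (\<forall>a x y. s a (x * y) = x * s a y)"

definition mmul :: "('i::finite \<Rightarrow> 'i \<Rightarrow> 'a::semiring_0) \<Rightarrow> ('i \<Rightarrow> 'i \<Rightarrow> 'a) \<Rightarrow> 'i \<Rightarrow> 'i \<Rightarrow> 'a" where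
  "mmul X Y = (\<lambda>i k. \<Sum>j\<in>UNIV. X i j * Y j k)"

definition lsc :: "(complex \<Rightarrow> 'a::ring \<Rightarrow> 'a) \<Rightarrow> ('i::finite \<Rightarrow> 'i \<Rightarrow> complex) \<Rightarrow> ('i \<Rightarrow> 'i \<Rightarrow> 'a) \<Rightarrow> 'i \<Rightarrow> 'i \<Rightarrow> 'a" where
  "lsc s C X = (\<lambda>i k. \<Sum>j\<in>UNIV. s (C i j) (X j k))"

definition rsc :: "(complex \<Rightarrow> 'a::ring \<Rightarrow> 'a) \<Rightarrow> ('i::finite \<Rightarrow> 'i \<Rightarrow> 'a) \<Rightarrow> ('i \<Rightarrow> 'i \<Rightarrow> complex) \<Rightarrow> 'i \<Rightarrow> 'i \<Rightarrow> 'a" where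
  "rsc s X C = (\<lambda>i k. \<Sum>j\<in>UNIV. s (C j k) (X i j))"

definition idm :: "'i \<Rightarrow> 'i \<Rightarrow> complex" where
  "idm = (\<lambda>i j. if i = j then 1 else 0)"

text \<open>X acting in the first tensor factor: X_1 = X \<otimes> Id\<close>
definition tens1 :: "('n \<Rightarrow> 'n \<Rightarrow> 'a::zero) \<Rightarrow> ('n \<times> 'n) \<Rightarrow> ('n \<times> 'n) \<Rightarrow> 'a" where
  "tens1 X = (\<lambda>(i, j) (k, l). if j = l then X i k else 0)"

text \<open>N_{bar 1} = N_1, N_{bar 2} = F N_1 F^{-1}\<close>
definition bar1 :: "('n \<Rightarrow> 'n \<Rightarrow> 'a::zero) \<Rightarrow> ('n \<times> 'n) \<Rightarrow> ('n \<times> 'n) \<Rightarrow> 'a" where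
  "bar1 N = tens1 N"

definition bar2 :: "(complex \<Rightarrow> 'a::ring \<Rightarrow> 'a) \<Rightarrow> ('n::finite \<times> 'n \<Rightarrow> 'n \<times> 'n \<Rightarrow> complex)
     \<Rightarrow> ('n \<times> 'n \<Rightarrow> 'n \<times> 'n \<Rightarrow> complex) \<Rightarrow> ('n \<Rightarrow> 'n \<Rightarrow> 'a) \<Rightarrow> ('n \<times> 'n) \<Rightarrow> ('n \<times> 'n) \<Rightarrow> 'a" where
  "bar2 s F Finv N = rsc s (lsc s F (tens1 N)) Finv"

definition cond_ii :: "complex \<Rightarrow> ('i::finite \<Rightarrow> 'i \<Rightarrow> complex) \<Rightarrow> ('i \<Rightarrow> 'i \<Rightarrow> complex) \<Rightarrow> ('i \<Rightarrow> 'i \<Rightarrow> complex) \<Rightarrow> bool" where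
  "cond_ii q R S A \<longleftrightarrow> q \<noteq> 0 \<and> q + inverse q \<noteq> 0 \<and>
     mmul S S = S \<and> mmul A A = A \<and> (\<forall>x y. S x y + A x y = idm x y) \<and>
     R = (\<lambda>x y. q * S x y - inverse q * A x y)"

definition half_quantum :: "(complex \<Rightarrow> 'a::ring \<Rightarrow> 'a) \<Rightarrow> ('n::finite \<times> 'n \<Rightarrow> 'n \<times> 'n \<Rightarrow> complex)
     \<Rightarrow> ('n \<times> 'n \<Rightarrow> 'n \<times> 'n \<Rightarrow> complex) \<Rightarrow> ('n \<times> 'n \<Rightarrow> 'n \<times> 'n \<Rightarrow> complex)
     \<Rightarrow> ('n \<times> 'n \<Rightarrow> 'n \<times> 'n \<Rightarrow> complex) \<Rightarrow> ('n \<Rightarrow> 'n \<Rightarrow> 'a) \<Rightarrow> bool" where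
  "half_quantum s S A F Finv M \<longleftrightarrow>
     rsc s (lsc s S (mmul (bar1 M) (bar2 s F Finv M))) A = (\<lambda>_ _. 0)"

end

theory Submission
  imports Defs
begin

lemma calg_facts:
  assumes "is_calg s"
  shows "s (a + b) x = s a x + s b x" "s a (x + y) = s a x + s a y"
    "s (a * b) x = s a (s b x)" "s 1 x = x" "s a (x * y) = s a x * y" "s a (x * y) = x * s a y"
  using assms unfolding is_calg_def by auto

lemma s0r: assumes "is_calg s" shows "s a 0 = 0"
proof -
  have "s a (0+0) = s a 0 + s a 0" using calg_facts(2)[OF assms] by blast
  thus ?thesis by simp
qed
lemma s0l: assumes "is_calg s" shows "s 0 x = 0"
proof -
  have "s (0+0) x = s 0 x + s 0 x" using calg_facts[OF assms] by metis
  thus ?thesis by simp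
qed
lemma s_sum_r: assumes "is_calg s" shows "s a (sum f I) = (\<Sum>i\<in>I. s a (f i))"
  by (induction I rule: infinite_finite_induct) (auto simp: s0r[OF assms] calg_facts[OF assms])
lemma s_sum_l: assumes "is_calg s" shows "s (sum c I) x = (\<Sum>i\<in>I. s (c i) x)"
  by (induction I rule: infinite_finite_induct) (auto simp: s0l[OF assms] calg_facts[OF assms])

lemma mmul_assoc: "mmul (mmul X Y) Z = mmul X (mmul Y Z)"
  unfolding mmul_def
  by (auto simp: sum_distrib_left sum_distrib_right mult.assoc intro!: ext sum.swap)

lemma mmul_assoc_c: "mmul (mmul (X::'i::finite\<Rightarrow>'i\<Rightarrow>complex) Y) Z = mmul X (mmul Y Z)"
  by (rule mmul_assoc)

context fixes s :: "complex \<Rightarrow> 'a::ring \<Rightarrow> 'a" assumes alg: "is_calg s"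
begin

lemma lsc_mmul: "lsc s C (mmul X Y) = mmul (lsc s C X) Y"
  unfolding lsc_def mmul_def
  by (auto simp: s_sum_r[OF alg] sum_distrib_right calg_facts(5)[OF alg] intro!: ext sum.swap)

lemma rsc_mmul: "rsc s (mmul X Y) C = mmul X (rsc s Y C)"
  unfolding rsc_def mmul_def
  by (auto simp: s_sum_r[OF alg] sum_distrib_left calg_facts(6)[OF alg] intro!: ext sum.swap)

lemma mmul_rsc: "mmul (rsc s X C) Y = mmul X (lsc s C Y)"
  unfolding rsc_def mmul_def lsc_def
  by (auto simp: sum_distrib_left sum_distrib_right calg_facts(5,6)[OF alg, symmetric] intro!: ext sum.swap)

lemma lsc_lsc: "lsc s (mmul C D) X = lsc s C (lsc s D X)"
  unfolding lsc_def mmul_def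
  by (auto simp: s_sum_r[OF alg] s_sum_l[OF alg] calg_facts(3)[OF alg] intro!: ext sum.swap)

lemma rsc_lsc: "rsc s (lsc s C X) D = lsc s C (rsc s X D)"
  unfolding lsc_def rsc_def
  by (auto simp: s_sum_r[OF alg] calg_facts(3)[OF alg, symmetric] mult.commute intro!: ext sum.swap)

lemma lsc_id: "lsc s idm X = X"
proof (intro ext)
  fix i k
  have "lsc s idm X i k = (\<Sum>j\<in>UNIV. if j = i then X j k else 0)"
    unfolding lsc_def idm_def by (intro sum.cong) (auto simp: s0l[OF alg] calg_facts(4)[OF alg])
  thus "lsc s idm X i k = X i k" by simp
qed

lemma rsc_id: "rsc s X idm = X"
proof (intro ext)
  fix i k
  have "rsc s X idm i k = (\<Sum>j\<in>UNIV. if j = k then X i j else 0)"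
    unfolding rsc_def idm_def by (intro sum.cong) (auto simp: s0l[OF alg] calg_facts(4)[OF alg])
  thus "rsc s X idm i k = X i k" by simp
qed

lemma rsc_add: "rsc s X (\<lambda>x y. C x y + D x y) = (\<lambda>x y. rsc s X C x y + rsc s X D x y)"
  unfolding rsc_def by (auto simp: calg_facts(1)[OF alg] sum.distrib intro!: ext)

lemma mmul_add: "mmul (\<lambda>x y. X x y + Y x y) Z = (\<lambda>x y. mmul X Z x y + mmul Y Z x y)"
  unfolding mmul_def by (auto simp: distrib_right sum.distrib intro!: ext)

lemma lsc_addX: "lsc s C (\<lambda>x y. X x y + Y x y) = (\<lambda>x y. lsc s C X x y + lsc s C Y x y)"
  unfolding lsc_def by (auto simp: calg_facts(2)[OF alg] sum.distrib intro!: ext)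

lemma rsc_addX: "rsc s (\<lambda>x y. X x y + Y x y) C = (\<lambda>x y. rsc s X C x y + rsc s Y C x y)"
  unfolding rsc_def by (auto simp: calg_facts(2)[OF alg] sum.distrib intro!: ext)

lemma mmul_0l: "mmul (\<lambda>_ _. 0) Y = (\<lambda>_ _. 0)" unfolding mmul_def by auto
lemma mmul_0r: "mmul X (\<lambda>_ _. 0) = (\<lambda>_ _. 0)" unfolding mmul_def by auto
lemma lsc_0: "lsc s C (\<lambda>_ _. 0) = (\<lambda>_ _. 0)" unfolding lsc_def by (auto simp: s0r[OF alg])
lemma rsc_0: "rsc s (\<lambda>_ _. 0) C = (\<lambda>_ _. 0)" unfolding rsc_def by (auto simp: s0r[OF alg])
end

lemma tens1_mmul: "tens1 (mmul M M') = mmul (tens1 M) (tens1 (M'::'n::finite\<Rightarrow>'n\<Rightarrow>'a::ring))"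
proof (intro ext, clarify)
  fix i j k l :: 'n
  have "mmul (tens1 M) (tens1 M') (i,j) (k,l) = (\<Sum>p\<in>UNIV. tens1 M (i,j) p * tens1 M' p (k,l))"
    unfolding mmul_def by simp
  also have "\<dots> = (\<Sum>a\<in>UNIV. \<Sum>b\<in>UNIV. tens1 M (i,j) (a,b) * tens1 M' (a,b) (k,l))"
    by (simp add: UNIV_Times_UNIV[symmetric] sum.cartesian_product del: UNIV_Times_UNIV)
  also have "\<dots> = (\<Sum>a\<in>UNIV. if j = l then M i a * M' a k else 0)"
  proof (intro sum.cong refl)
    fix a
    have "(\<Sum>b\<in>UNIV. tens1 M (i,j) (a,b) * tens1 M' (a,b) (k,l)) = (\<Sum>b\<in>UNIV. if b = j then (if j = l then M i a * M' a k else 0) else 0)"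
      unfolding tens1_def by (intro sum.cong) auto
    thus "(\<Sum>b\<in>UNIV. tens1 M (i,j) (a,b) * tens1 M' (a,b) (k,l)) = (if j = l then M i a * M' a k else 0)" by simp
  qed
  finally show "tens1 (mmul M M') (i,j) (k,l) = mmul (tens1 M) (tens1 M') (i,j) (k,l)"
    unfolding tens1_def mmul_def by auto
qed


theorem mainTheorem8:
  fixes s :: "complex \<Rightarrow> 'a::ring \<Rightarrow> 'a"
    and q :: complex
    and R S A F Finv :: "'n::finite \<times> 'n \<Rightarrow> 'n \<times> 'n \<Rightarrow> complex"
    and M M' :: "'n \<Rightarrow> 'n \<Rightarrow> 'a"
  assumes alg: "is_calg s"
    and ii: "cond_ii q R S A"
    and F_inv1: "mmul F Finv = idm"
    and F_inv2: "mmul Finv F = idm"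
    and hqM: "half_quantum s S A F Finv M"
    and hqM': "half_quantum s S A F Finv M'"
    and comm: "mmul (bar2 s F Finv M) (tens1 M') = mmul (tens1 M') (bar2 s F Finv M)"
  shows "half_quantum s S A F Finv (mmul M M')"
proof -
  define X where "X = tens1 M"
  define Y where "Y = tens1 M'"
  define P where "P = bar2 s F Finv M"
  define Q where "Q = bar2 s F Finv M'"
  have SA: "idm = (\<lambda>x y. S x y + A x y)" proof -
    have "\<forall>x y. S x y + A x y = idm x y" using ii unfolding cond_ii_def by blast
    thus ?thesis by (intro ext) metis
  qed
  have b2: "bar2 s F Finv (mmul M M') = mmul P Q"
  proof -
    have "mmul P Q = mmul (lsc s F X) (lsc s Finv (rsc s (lsc s F Y) Finv))"
      unfolding P_def Q_def bar2_def X_def Y_def by (simp add: mmul_rsc[OF alg])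
    also have "lsc s Finv (rsc s (lsc s F Y) Finv) = rsc s Y Finv"
      by (simp add: rsc_lsc[OF alg] lsc_lsc[OF alg, symmetric] F_inv2 lsc_id[OF alg])
    also have "mmul (lsc s F X) (rsc s Y Finv) = rsc s (lsc s F (mmul X Y)) Finv"
      by (simp add: rsc_mmul[OF alg] lsc_mmul[OF alg])
    finally show ?thesis unfolding bar2_def X_def Y_def tens1_mmul by simp
  qed
  have hM: "rsc s (lsc s S (mmul X P)) A = (\<lambda>_ _. 0)"
    using hqM unfolding half_quantum_def bar1_def X_def P_def .
  have hM': "rsc s (lsc s S (mmul Y Q)) A = (\<lambda>_ _. 0)"
    using hqM' unfolding half_quantum_def bar1_def Y_def Q_def .
  have cPY: "mmul P Y = mmul Y P" using comm unfolding P_def Y_def .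
  define Z where "Z = mmul X P"
  define W where "W = mmul Y Q"
  have "mmul (mmul X Y) (mmul P Q) = mmul X (mmul (mmul Y P) Q)"
    by (simp add: mmul_assoc)
  also have "\<dots> = mmul Z W" unfolding Z_def W_def by (simp add: cPY[symmetric] mmul_assoc)
  also have "\<dots> = mmul (rsc s Z idm) W" by (simp add: rsc_id[OF alg])
  also have "\<dots> = (\<lambda>x y. mmul (rsc s Z S) W x y + mmul (rsc s Z A) W x y)"
    unfolding SA rsc_add[OF alg] mmul_add[OF alg] ..
  finally have e: "mmul (mmul X Y) (mmul P Q) = (\<lambda>x y. mmul (rsc s Z S) W x y + mmul (rsc s Z A) W x y)" .
  have t1: "rsc s (lsc s S (mmul (rsc s Z S) W)) A = (\<lambda>_ _. 0)"
  proof -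
    have "lsc s S (mmul (rsc s Z S) W) = lsc s S (mmul Z (lsc s S W))"
      by (simp only: mmul_rsc[OF alg])
    also have "\<dots> = mmul (lsc s S Z) (lsc s S W)" by (simp only: lsc_mmul[OF alg])
    finally have "rsc s (lsc s S (mmul (rsc s Z S) W)) A = mmul (lsc s S Z) (rsc s (lsc s S W) A)"
      by (simp only: rsc_mmul[OF alg])
    thus ?thesis by (simp add: W_def hM' mmul_0r[OF alg])
  qed
  have t2: "lsc s S (mmul (rsc s Z A) W) = (\<lambda>_ _. 0)"
  proof -
    have "lsc s S (mmul (rsc s Z A) W) = mmul (rsc s (lsc s S Z) A) W"
      by (simp only: lsc_mmul[OF alg] rsc_lsc[OF alg])
    thus ?thesis by (simp add: Z_def hM mmul_0l[OF alg])
  qed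
  show ?thesis
    unfolding half_quantum_def bar1_def b2 tens1_mmul
    apply (fold X_def Y_def)
    unfolding e lsc_addX[OF alg] rsc_addX[OF alg] t1 t2 rsc_0[OF alg] by simp
qed

end
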